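(* For all integers $\mu_1,\mu_2\ge0$ and $i,j,k,m\ge0$: if $\omega_i+\omega_j+\omega_k-\omega_m=0$, or $\omega_i+\omega_j-\omega_k+\omega_m=0$, or $\omega_i-\omega_j+\omega_k+\omega_m=0$, or $-\omega_i+\omega_j+\omega_k+\omega_m=0$ (with $\omega_n=\omega_n^{(\mu_1,\mu_2)}$), then $\mathsf{C}^{(\mu_1,\mu_2)}_{ijkm}=0$.
   Context: $\omega_n^{(\mu_1,\mu_2)}=2n+1+\mu_1+\mu_2$. $\mathsf{e}_n(x)=\mathsf{N}_n(1-\cos2x)^{\mu_1/2}(1+\cos2x)^{\mu_2/2}P_n^{(\mu_1,\mu_2)}(\cos2x)$ with $P_n^{(\mu_1,\mu_2)}$ Jacobi polynomials and $\mathsf{N}_n=\sqrt{\frac{\omega_n}{2^{\mu_1+\mu_2}}\frac{\Gamma(n+1)\Gamma(n+\mu_1+\mu_2+1)}{\Gamma(n+\mu_1+1)\Gamma(n+\mu_2+1)}}$; $\mathsf{C}^{(\mu_1,\mu_2)}_{ijkm}=\int_0^{\pi/2}\mathsf{e}_i\mathsf{e}_j\mathsf{e}_k\mathsf{e}_m\sin(2x)\,dx$. *)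

theory Defs
  imports "HOL-Analysis.Analysis"
begin

definition omega :: "nat \<Rightarrow> nat \<Rightarrow> nat \<Rightarrow> int" where
  "omega mu1 mu2 n = 2 * int n + 1 + int mu1 + int mu2"

definition jacobiP :: "nat \<Rightarrow> nat \<Rightarrow> nat \<Rightarrow> real \<Rightarrow> real" where
  "jacobiP n a b x = (\<Sum>s\<le>n. real ((n + a) choose (n - s)) * real ((n + b) choose s)
       * ((x - 1) / 2) ^ s * ((x + 1) / 2) ^ (n - s))"

definition normN :: "nat \<Rightarrow> nat \<Rightarrow> nat \<Rightarrow> real" where
  "normN mu1 mu2 n = sqrt (real_of_int (omega mu1 mu2 n) / 2 ^ (mu1 + mu2)
      * (Gamma (real n + 1) * Gamma (real n + real mu1 + real mu2 + 1))
      / (Gamma (real n + real mu1 + 1) * Gamma (real n + real mu2 + 1)))"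

text \<open>Eigenfunctions e_n(x); (1 - cos 2x)^(mu1/2) is written sqrt(1 - cos 2x)^mu1
  (the base is nonnegative).\<close>
definition eigf :: "nat \<Rightarrow> nat \<Rightarrow> nat \<Rightarrow> real \<Rightarrow> real" where
  "eigf mu1 mu2 n x = normN mu1 mu2 n * sqrt (1 - cos (2 * x)) ^ mu1
      * sqrt (1 + cos (2 * x)) ^ mu2 * jacobiP n mu1 mu2 (cos (2 * x))"

definition Ccoef :: "nat \<Rightarrow> nat \<Rightarrow> nat \<Rightarrow> nat \<Rightarrow> nat \<Rightarrow> nat \<Rightarrow> real" where
  "Ccoef mu1 mu2 i j k m = integral {0..pi/2}
     (\<lambda>x. eigf mu1 mu2 i x * eigf mu1 mu2 j x * eigf mu1 mu2 k x * eigf mu1 mu2 m x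
          * sin (2 * x))"

end

theory Submission imports Defs "HOL-Computational_Algebra.Polynomial"
begin

lemma Suc_choose': "Suc n choose k = (n choose k) + (if k = 0 then 0 else (n choose (k-1)))"
  by (cases k) simp_all

lemma pderiv_sum: "pderiv (\<Sum>i\<in>S. f i) = (\<Sum>i\<in>S. pderiv (f i))"
  by (induction S rule: infinite_finite_induct) (auto simp: pderiv_add)

lemma pderiv_leibniz:
  fixes p q :: "real poly"
  shows "(pderiv ^^ n) (p * q) =
     (\<Sum>i = 0..n. smult (of_nat (n choose i)) ((pderiv ^^ i) p * (pderiv ^^ (n-i)) q))"
proof (induction n)
  case 0 then show ?case by simp
next
  case (Suc n)
  define F where "F i j = (pderiv ^^ i) p * (pderiv ^^ j) q" for i j
  have "(pderiv ^^ Suc n) (p * q) = pderiv ((pderiv ^^ n) (p * q))" by simp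
  also have "\<dots> = (\<Sum>i = 0..n. smult (of_nat (n choose i))
       ((pderiv ^^ i) p * (pderiv ^^ Suc (n-i)) q + (pderiv ^^ (n-i)) q * (pderiv ^^ Suc i) p))"
    by (simp add: Suc pderiv_sum pderiv_smult pderiv_mult)
  also have "\<dots> = (\<Sum>i = 0..n. smult (of_nat (n choose i)) (F i (Suc n - i)))
        + (\<Sum>i = 0..n. smult (of_nat (n choose i)) (F (Suc i) (n - i)))"
    by (simp add: F_def sum.distrib smult_add_right Suc_diff_le algebra_simps)
  also have "(\<Sum>i = 0..n. smult (of_nat (n choose i)) (F (Suc i) (n - i)))
      = (\<Sum>i = Suc 0..Suc n. smult (of_nat (n choose (i - 1))) (F i (Suc n - i)))"
    by (simp only: sum.shift_bounds_cl_Suc_ivl) simp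
  also have "\<dots> = (\<Sum>i = 0..Suc n. smult (of_nat (if i = 0 then 0 else n choose (i - 1))) (F i (Suc n - i)))"
    by (subst sum.atLeast_Suc_atMost[of 0]) (auto intro: sum.cong)
  also have "(\<Sum>i = 0..n. smult (of_nat (n choose i)) (F i (Suc n - i)))
      = (\<Sum>i = 0..Suc n. smult (of_nat (n choose i)) (F i (Suc n - i)))"
    by simp
  finally show ?case
    by (simp add: F_def Suc_choose' sum.distrib[symmetric] smult_add_left del: of_nat_Suc)
qed


lemma pderiv_funpow_lin:
  fixes c d :: real
  shows "k \<le> n \<Longrightarrow> (pderiv ^^ k) ([:c,d:]^n) = smult (d^k * fact n / fact (n-k)) ([:c,d:]^(n-k))"
proof (induction k)
  case 0 then show ?case by simp
next
  case (Suc k)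
  then have IH: "(pderiv ^^ k) ([:c,d:]^n) = smult (d^k * fact n / fact (n-k)) ([:c,d:]^(n-k))" by simp
  obtain r where r: "n - k = Suc r" using Suc.prems by (metis Suc_diff_le Suc_le_lessD diff_Suc_Suc less_imp_Suc_add add_Suc diff_Suc_1 Suc_diff_Suc)
  have r2: "n - Suc k = r" using r by simp
  have "(pderiv ^^ Suc k) ([:c,d:]^n) = pderiv (smult (d^k * fact n / fact (n-k)) ([:c,d:]^(n-k)))"
    using IH by simp
  also have "\<dots> = smult (d^k * fact n / fact (n-k) * (of_nat (Suc r)) * d) ([:c,d:]^r)"
  proof -
    have lin: "pderiv [:c,d:] = [:d:]" by (simp add: pderiv_pCons)
    have "pderiv ([:c,d:]^Suc r) = smult (of_nat (Suc r)) ([:c,d:]^r) * [:d:]"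
      by (simp only: pderiv_power_Suc lin)
    also have "\<dots> = smult (of_nat (Suc r) * d) ([:c,d:]^r)" by (simp add: mult.commute)
    finally show ?thesis unfolding r by (simp add: pderiv_smult mult.assoc)
  qed
  also have "d^k * fact n / fact (n-k) * (of_nat (Suc r)) * d = d^Suc k * fact n / fact (n - Suc k)"
    unfolding r r2 by (simp add: fact_Suc del: of_nat_Suc)
  finally show ?case using r2 by simp
qed

lemma dvd_pderiv_pow:
  fixes q p :: "real poly"
  assumes "q ^ Suc r dvd p" shows "q ^ r dvd pderiv p"
proof -
  obtain s where s: "p = q ^ Suc r * s" using assms by (auto elim: dvdE)
  have "pderiv p = q ^ Suc r * pderiv s + s * (smult (of_nat (Suc r)) (q ^ r) * pderiv q)"
    unfolding s by (simp only: pderiv_mult pderiv_power_Suc)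
  also have "\<dots> = q^r * (q * pderiv s + smult (of_nat (Suc r)) (s * pderiv q))"
    by (simp add: algebra_simps)
  finally show ?thesis by simp
qed

lemma dvd_pderiv_funpow:
  fixes q p :: "real poly"
  shows "q ^ n dvd p \<Longrightarrow> j \<le> n \<Longrightarrow> q ^ (n - j) dvd (pderiv ^^ j) p"
proof (induction j)
  case 0 then show ?case by simp
next
  case (Suc j)
  then have "q ^ Suc (n - Suc j) dvd (pderiv ^^ j) p" by (simp add: Suc_diff_Suc)
  then show ?case by (simp add: dvd_pderiv_pow)
qed

lemma funpow_pderiv_deg: "degree (Q::real poly) < k \<Longrightarrow> (pderiv ^^ k) Q = 0"
proof (induction k arbitrary: Q)
  case 0 then show ?case by simp
next
  case (Suc k)
  show ?case
  proof (cases "degree Q = 0")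
    case True
    then have "pderiv Q = 0" by (simp add: pderiv_eq_0_iff)
    then show ?thesis by (simp add: funpow_Suc_right funpow_swap1 del: funpow.simps)
  next
    case False
    then have "degree (pderiv Q) < k" using Suc.prems by (simp add: degree_pderiv)
    then have "(pderiv ^^ k) (pderiv Q) = 0" by (rule Suc.IH)
    then show ?thesis by (simp add: funpow_Suc_right del: funpow.simps)
  qed
qed

definition Jf :: "real poly \<Rightarrow> real" where
  "Jf p = integral {0..pi/2} (\<lambda>x. poly p (cos (2*x)) * sin (2*x))"

lemma Jf_integrable: "(\<lambda>x. poly p (cos (2*x)) * sin (2*x)) integrable_on {0..pi/2}"
  by (intro integrable_continuous_interval continuous_intros)

lemma Jf_diff: "Jf (p - q) = Jf p - Jf q"
proof -
  have "(\<lambda>x. poly (p - q) (cos (2*x)) * sin (2*x)) = (\<lambda>x. poly p (cos (2*x)) * sin (2*x) - poly q (cos (2*x)) * sin (2*x))"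
    by (simp add: algebra_simps)
  then show ?thesis unfolding Jf_def by (simp add: integral_diff[OF Jf_integrable Jf_integrable])
qed

lemma Jf_smult: "Jf (smult c p) = c * Jf p"
  unfolding Jf_def by (simp add: mult.assoc)

lemma Jf_pderiv: "Jf (pderiv p) = (poly p 1 - poly p (-1)) / 2"
proof -
  have d: "((\<lambda>x. - poly p (cos (2*x)) / 2) has_real_derivative poly (pderiv p) (cos (2*x)) * sin (2*x)) (at x)" for x
    by (auto intro!: derivative_eq_intros DERIV_chain2[OF poly_DERIV])
  have "((\<lambda>x. poly (pderiv p) (cos (2*x)) * sin (2*x)) has_integral
      ((- poly p (cos (2*(pi/2))) / 2) - (- poly p (cos (2*0)) / 2))) {0..pi/2}"
    apply (rule fundamental_theorem_of_calculus)
     apply simp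
    unfolding has_real_derivative_iff_has_vector_derivative[symmetric]
    apply (rule has_field_derivative_at_within)
    apply (rule d)
    done
  then show ?thesis unfolding Jf_def by (simp add: integral_unique field_simps)
qed


lemma term_id:
  fixes y :: real
  shows "real ((s+t) choose s) * (fact (s+t+b) / fact (b+t) * (1+y)^(b+t)) * ((-1)^t * fact (s+t+a)/fact (a+s) * (1-y)^(a+s))
  = (-2)^(s+t) * fact (s+t) * ((1-y)^a * (1+y)^b * (real ((s+t+a) choose t) * real ((s+t+b) choose s) * ((y-1)/2)^s * ((y+1)/2)^t))"
proof -
  have e1: "real ((s+t) choose s) = fact (s+t) / (fact s * fact t)" by (simp add: binomial_fact)
  have e2: "real ((s+t+a) choose t) = fact (s+t+a) / (fact t * fact (a+s))"
    by (simp add: binomial_fact algebra_simps)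
  have e3: "real ((s+t+b) choose s) = fact (s+t+b) / (fact s * fact (b+t))"
    by (simp add: binomial_fact algebra_simps)
  have e4: "((y-1)/2)^s = (-1)^s * (1-y)^s / 2^s" by (simp add: power_divide power_mult_distrib[symmetric])
  have e5: "((y+1)/2)^t = (1+y)^t / 2^t" by (simp add: power_divide add.commute)
  have e6: "(-2::real)^(s+t) = (-1)^s * (-1)^t * 2^s * 2^t" by (simp add: power_add power_minus[of "2::real"])
  show ?thesis unfolding e1 e2 e3 e4 e5 e6
    by (simp add: power_add field_simps)
qed


definition PJ :: "nat \<Rightarrow> nat \<Rightarrow> nat \<Rightarrow> real poly" where
  "PJ n a b = (\<Sum>s\<le>n. smult (real ((n + a) choose (n - s)) * real ((n + b) choose s))
       ([:-1/2, 1/2:] ^ s * [:1/2, 1/2:] ^ (n - s)))"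

lemma poly_PJ: "poly (PJ n a b) x = jacobiP n a b x"
  unfolding PJ_def jacobiP_def by (simp add: poly_sum field_simps)

lemma degree_PJ: "degree (PJ n a b) \<le> n"
  unfolding PJ_def
proof (rule degree_sum_le)
  fix s assume "s \<in> {..n}"
  then have sn: "s \<le> n" by simp
  have "degree ([:-1/2, 1/2:] ^ s * [:1/2, 1/2:] ^ (n - s) :: real poly) \<le> s + (n - s)"
    by (intro order.trans[OF degree_mult_le] add_mono order.trans[OF degree_power_le]) auto
  then show "degree (smult (real ((n + a) choose (n - s)) * real ((n + b) choose s))
       ([:-1/2, 1/2:] ^ s * [:1/2, 1/2:] ^ (n - s) :: real poly)) \<le> n"
    using sn by (metis degree_smult_le le_add_diff_inverse order_trans)
qed simp

definition wp :: "nat \<Rightarrow> nat \<Rightarrow> real poly" where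
  "wp a b = [:1,-1:]^a * [:1,1:]^b"

definition GG :: "nat \<Rightarrow> nat \<Rightarrow> nat \<Rightarrow> real poly" where
  "GG m a b = [:1,1:]^(m+b) * [:1,-1:]^(m+a)"

lemma rodrigues: "(pderiv ^^ m) (GG m a b) = smult ((-2)^m * fact m) (wp a b * PJ m a b)"
proof -
  have "(pderiv ^^ m) (GG m a b) = (\<Sum>i = 0..m. smult (of_nat (m choose i))
      ((pderiv ^^ i) ([:1,1:]^(m+b)) * (pderiv ^^ (m-i)) ([:1,-1:]^(m+a))))"
    unfolding GG_def by (rule pderiv_leibniz)
  also have "\<dots> = (\<Sum>i = 0..m. smult (of_nat (m choose i))
      (smult (fact (m+b) / fact (m+b-i)) ([:1,1:]^(m+b-i)) *
       smult ((-1)^(m-i) * fact (m+a) / fact (m+a-(m-i))) ([:1,-1:]^(m+a-(m-i)))))"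
    by (intro sum.cong refl) (simp add: pderiv_funpow_lin)
  also have "\<dots> = smult ((-2)^m * fact m) (wp a b * PJ m a b)"
  proof (rule poly_eq_poly_eq_iff[THEN iffD1], rule ext)
    fix y :: real
    have "poly (wp a b * PJ m a b) y = (\<Sum>s = 0..m. (1-y)^a * (1+y)^b * (real ((m + a) choose (m - s)) * real ((m + b) choose s) * ((y-1)/2)^s * ((y+1)/2)^(m-s)))"
      unfolding wp_def poly_mult poly_PJ jacobiP_def by (simp add: sum_distrib_left atMost_atLeast0 algebra_simps)
    moreover have "poly (\<Sum>i = 0..m. smult (of_nat (m choose i))
      (smult (fact (m+b) / fact (m+b-i)) ([:1,1:]^(m+b-i)) *
       smult ((-1)^(m-i) * fact (m+a) / fact (m+a-(m-i))) ([:1,-1:]^(m+a-(m-i))))) y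
      = (\<Sum>s = 0..m. (-2)^m * fact m * ((1-y)^a * (1+y)^b * (real ((m + a) choose (m - s)) * real ((m + b) choose s) * ((y-1)/2)^s * ((y+1)/2)^(m-s))))"
      unfolding poly_sum
    proof (intro sum.cong refl)
      fix s assume "s \<in> {0..m}"
      then obtain t where t: "m = s + t" by (auto simp: le_iff_add)
      have "poly (smult (of_nat (m choose s))
        (smult (fact (m+b) / fact (m+b-s)) ([:1,1:]^(m+b-s)) *
         smult ((-1)^(m-s) * fact (m+a) / fact (m+a-(m-s))) ([:1,-1:]^(m+a-(m-s))))) y
        = real ((s+t) choose s) * (fact (s+t+b) / fact (b+t) * (1+y)^(b+t)) * ((-1)^t * fact (s+t+a)/fact (a+s) * (1-y)^(a+s))"
        unfolding t by (simp add: algebra_simps)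
      also have "\<dots> = (-2)^(s+t) * fact (s+t) * ((1-y)^a * (1+y)^b * (real ((s+t+a) choose t) * real ((s+t+b) choose s) * ((y-1)/2)^s * ((y+1)/2)^t))"
        by (rule term_id)
      finally show "poly (smult (of_nat (m choose s))
        (smult (fact (m+b) / fact (m+b-s)) ([:1,1:]^(m+b-s)) *
         smult ((-1)^(m-s) * fact (m+a) / fact (m+a-(m-s))) ([:1,-1:]^(m+a-(m-s))))) y
        = (-2)^m * fact m * ((1-y)^a * (1+y)^b * (real ((m + a) choose (m - s)) * real ((m + b) choose s) * ((y-1)/2)^s * ((y+1)/2)^(m-s)))"
        unfolding t by (simp add: algebra_simps)
    qed
    ultimately show "poly (\<Sum>i = 0..m. smult (of_nat (m choose i))
      (smult (fact (m+b) / fact (m+b-i)) ([:1,1:]^(m+b-i)) *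
       smult ((-1)^(m-i) * fact (m+a) / fact (m+a-(m-i))) ([:1,-1:]^(m+a-(m-i))))) y
      = poly (smult ((-2)^m * fact m) (wp a b * PJ m a b)) y"
      by (simp add: sum_distrib_left)
  qed
  finally show ?thesis .
qed

lemma root_dvd_pow:
  fixes q p :: "real poly"
  assumes "q ^ n dvd p" "j < n" "poly q x = 0"
  shows "poly ((pderiv ^^ j) p) x = 0"
proof -
  have "q ^ (n - j) dvd (pderiv ^^ j) p" using assms by (intro dvd_pderiv_funpow) auto
  moreover have "q dvd q ^ (n - j)" using assms(2) by (intro dvd_power) auto
  ultimately have "q dvd (pderiv ^^ j) p" by (rule dvd_trans[rotated])
  then obtain r where "(pderiv ^^ j) p = q * r" by (auto elim: dvdE)
  then show ?thesis using assms(3) by simp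
qed

lemma GG_vanish:
  assumes "j < m"
  shows "poly ((pderiv ^^ j) (GG m a b)) 1 = 0" "poly ((pderiv ^^ j) (GG m a b)) (-1) = 0"
proof -
  show "poly ((pderiv ^^ j) (GG m a b)) 1 = 0"
    by (rule root_dvd_pow[of "[:1,-1:]" m]) (use assms in \<open>auto simp: GG_def power_add\<close>)
  show "poly ((pderiv ^^ j) (GG m a b)) (-1) = 0"
    by (rule root_dvd_pow[of "[:1,1:]" m]) (use assms in \<open>auto simp: GG_def power_add\<close>)
qed

lemma ibp:
  "k \<le> m \<Longrightarrow> (pderiv ^^ k) Q = 0 \<Longrightarrow> Jf ((pderiv ^^ k) (GG m a b) * Q) = 0"
proof (induction k arbitrary: Q)
  case 0 then show ?case by (simp add: Jf_def)
next
  case (Suc k)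
  define A where "A = (pderiv ^^ k) (GG m a b)"
  have "(pderiv ^^ Suc k) (GG m a b) * Q = pderiv (A * Q) - A * pderiv Q"
    by (simp add: A_def pderiv_mult algebra_simps)
  moreover have "Jf (pderiv (A * Q)) = 0"
    using GG_vanish[of k m a b] Suc.prems by (simp add: Jf_pderiv A_def)
  moreover have "Jf (A * pderiv Q) = 0"
    unfolding A_def using Suc.prems
    by (intro Suc.IH) (auto simp: funpow_Suc_right simp del: funpow.simps)
  ultimately show ?case by (simp add: Jf_diff)
qed

lemma orth:
  assumes "degree Q < m"
  shows "Jf (wp a b * PJ m a b * Q) = 0"
proof -
  have c: "((-2::real)^m * fact m) \<noteq> 0" by simp
  have "wp a b * PJ m a b * Q = smult (inverse ((-2)^m * fact m)) ((pderiv ^^ m) (GG m a b) * Q)"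
  proof -
    have "smult (inverse ((-2)^m * fact m)) ((pderiv ^^ m) (GG m a b) * Q)
       = smult (inverse ((-2)^m * fact m) * ((-2)^m * fact m)) (wp a b * PJ m a b * Q)"
      by (simp only: rodrigues smult_smult mult_smult_left)
    also have "inverse ((-2::real)^m * fact m) * ((-2)^m * fact m) = 1" by (rule left_inverse[OF c])
    finally show ?thesis by simp
  qed
  then show ?thesis using ibp[of m m Q a b] funpow_pderiv_deg[OF assms] by (simp add: Jf_smult)
qed


lemma degree_wp: "degree (wp a b) \<le> a + b"
  unfolding wp_def
  by (intro order.trans[OF degree_mult_le] add_mono order.trans[OF degree_power_le]) auto

lemma integrand_eq:
  "eigf a b i x * eigf a b j x * eigf a b k x * eigf a b m x * sin (2 * x)
   = (normN a b i * normN a b j * normN a b k * normN a b m) *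
     (poly (wp a b * PJ m a b * (wp a b * PJ i a b * PJ j a b * PJ k a b)) (cos (2*x)) * sin (2*x))"
proof -
  define c where "c = cos (2*x)"
  define u where "u = sqrt (1 - c)"
  define v where "v = sqrt (1 + c)"
  have c1: "c \<le> 1" "-1 \<le> c" unfolding c_def by auto
  have uu: "u * u = 1 - c" unfolding u_def using c1 by simp
  have vv: "v * v = 1 + c" unfolding v_def using c1 by simp
  have U: "u^a * u^a = (1-c)^a" by (simp add: power_mult_distrib[symmetric] uu)
  have V: "v^b * v^b = (1+c)^b" by (simp add: power_mult_distrib[symmetric] vv)
  have pw: "poly (wp a b) c = (1-c)^a * (1+c)^b" unfolding wp_def by simp
  have "eigf a b i x * eigf a b j x * eigf a b k x * eigf a b m x
     = (normN a b i * normN a b j * normN a b k * normN a b m) * ((u^a * u^a) * (v^b * v^b)) * ((u^a * u^a) * (v^b * v^b))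
       * poly (PJ i a b) c * poly (PJ j a b) c * poly (PJ k a b) c * poly (PJ m a b) c"
    unfolding eigf_def poly_PJ c_def[symmetric] u_def[symmetric] v_def[symmetric] by (simp add: mult_ac)
  also have "\<dots> = (normN a b i * normN a b j * normN a b k * normN a b m) *
      poly (wp a b * PJ m a b * (wp a b * PJ i a b * PJ j a b * PJ k a b)) c"
    unfolding U V poly_mult pw by (simp add: mult_ac)
  finally show ?thesis unfolding c_def by (simp add: mult_ac)
qed

lemma main_case:
  assumes "m = i + j + k + 1 + a + b"
  shows "Ccoef a b i j k m = 0"
proof -
  let ?Q = "wp a b * PJ i a b * PJ j a b * PJ k a b"
  have "degree ?Q \<le> a + b + i + j + k"
    by (intro order.trans[OF degree_mult_le] add_mono degree_wp degree_PJ)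
  then have dQ: "degree ?Q < m" using assms by simp
  have "Ccoef a b i j k m = integral {0..pi/2} (\<lambda>x. (normN a b i * normN a b j * normN a b k * normN a b m) *
     (poly (wp a b * PJ m a b * ?Q) (cos (2*x)) * sin (2*x)))"
    unfolding Ccoef_def integrand_eq ..
  also have "\<dots> = (normN a b i * normN a b j * normN a b k * normN a b m) * Jf (wp a b * PJ m a b * ?Q)"
    unfolding Jf_def by simp
  also have "\<dots> = 0" using orth[OF dQ] by simp
  finally show ?thesis .
qed

theorem lemma5p3:
  fixes mu1 mu2 i j k m :: nat
  assumes "omega mu1 mu2 i + omega mu1 mu2 j + omega mu1 mu2 k - omega mu1 mu2 m = 0
         \<or> omega mu1 mu2 i + omega mu1 mu2 j - omega mu1 mu2 k + omega mu1 mu2 m = 0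
         \<or> omega mu1 mu2 i - omega mu1 mu2 j + omega mu1 mu2 k + omega mu1 mu2 m = 0
         \<or> - omega mu1 mu2 i + omega mu1 mu2 j + omega mu1 mu2 k + omega mu1 mu2 m = 0"
  shows "Ccoef mu1 mu2 i j k m = 0"
proof -
  have s1: "Ccoef mu1 mu2 i j k m = Ccoef mu1 mu2 i j m k"
    unfolding Ccoef_def by (simp add: mult_ac)
  have s2: "Ccoef mu1 mu2 i j k m = Ccoef mu1 mu2 i k m j"
    unfolding Ccoef_def by (simp add: mult_ac)
  have s3: "Ccoef mu1 mu2 i j k m = Ccoef mu1 mu2 j k m i"
    unfolding Ccoef_def by (simp add: mult_ac)
  from assms show ?thesis
  proof (elim disjE)
    assume h: "omega mu1 mu2 i + omega mu1 mu2 j + omega mu1 mu2 k - omega mu1 mu2 m = 0"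
    then have "m = i + j + k + 1 + mu1 + mu2" unfolding omega_def by linarith
    then show ?thesis by (rule main_case)
  next
    assume h: "omega mu1 mu2 i + omega mu1 mu2 j - omega mu1 mu2 k + omega mu1 mu2 m = 0"
    then have "k = i + j + m + 1 + mu1 + mu2" unfolding omega_def by linarith
    then show ?thesis unfolding s1 by (rule main_case)
  next
    assume h: "omega mu1 mu2 i - omega mu1 mu2 j + omega mu1 mu2 k + omega mu1 mu2 m = 0"
    then have "j = i + k + m + 1 + mu1 + mu2" unfolding omega_def by linarith
    then show ?thesis unfolding s2 by (rule main_case)
  next
    assume h: "- omega mu1 mu2 i + omega mu1 mu2 j + omega mu1 mu2 k + omega mu1 mu2 m = 0"
    then have "i = j + k + m + 1 + mu1 + mu2" unfolding omega_def by linarith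
    then show ?thesis unfolding s3 by (rule main_case)
  qed
qed

end
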